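(* The category $\mathbf{gOS}^{op}$ is Gröbner.
   Context: Gröbner categories. Let $\mathcal{C}$ be a small category and $c$ an object. An admissible order on the morphisms out of $c$ is a choice, for every object $c'$, of a well-order $\preceq_{c'}$ on $\mathrm{Hom}(c,c')$ such that $f\prec_{c'} f'$ implies $g\circ f\prec_{c''} g\circ f'$ for all $g:c'\to c''$. On morphisms out of $c$ put the preorder $f\le g$ iff $g=h\circ f$ for some $h$; $|c/\mathcal{C}|$ is the associated poset. A poset is Noetherian if every sequence $x_1,x_2,\dots$ has $i<j$ with $x_i\le x_j$. $\mathcal{C}$ is Gröbner if for every object $c$: (G1) morphisms out of $c$ admit an admissible order, and (G2) $|c/\mathcal{C}|$ is Noetherian. The category $\mathbf{gOS}$ of graded ordered surjections has objects $\underline{n}=\{1,\dots,n\}$ for $n\ge 0$. A morphism $f:\underline{n}\to\underline{m}$ is a surjection $f$ such that $\min f^{-1}(i)<\min f^{-1}(j)$ whenever $i<j$, together with a grading $g_f:\underline{m}\to\mathbb{N}$. For $f:\underline{n}\to\underline{m}$ and $h:\underline{m}\to\underline{k}$, the composite $h\circ f$ is the composite of maps with grading $g_{h\circ f}(i)=g_h(i)+\sum_{j\in h^{-1}(i)}g_f(j)$. *)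

theory Defs
  imports Main
begin

text \<open>A small category is presented by a set of objects Ob, hom-sets Hom c c'
  (assumed pairwise disjoint, as in a category), and composition cmp g f = g o f.\<close>

definition out_mor :: "'o set \<Rightarrow> ('o \<Rightarrow> 'o \<Rightarrow> 'm set) \<Rightarrow> 'o \<Rightarrow> 'm set" where
  "out_mor Ob Hom c = (\<Union>c'\<in>Ob. Hom c c')"

definition mor_le :: "'o set \<Rightarrow> ('o \<Rightarrow> 'o \<Rightarrow> 'm set) \<Rightarrow> ('m \<Rightarrow> 'm \<Rightarrow> 'm) \<Rightarrow> 'o \<Rightarrow> 'm \<Rightarrow> 'm \<Rightarrow> bool" where
  "mor_le Ob Hom cmp c f g \<longleftrightarrow>
     (\<exists>c'\<in>Ob. \<exists>c''\<in>Ob. f \<in> Hom c c' \<and> (\<exists>h\<in>Hom c' c''. g = cmp h f))"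

definition admissible_order :: "'o set \<Rightarrow> ('o \<Rightarrow> 'o \<Rightarrow> 'm set) \<Rightarrow> ('m \<Rightarrow> 'm \<Rightarrow> 'm) \<Rightarrow> 'o
    \<Rightarrow> ('o \<Rightarrow> ('m \<times> 'm) set) \<Rightarrow> bool" where
  "admissible_order Ob Hom cmp c R \<longleftrightarrow>
     (\<forall>c'\<in>Ob. well_order_on (Hom c c') (R c')) \<and>
     (\<forall>c'\<in>Ob. \<forall>c''\<in>Ob. \<forall>f\<in>Hom c c'. \<forall>f'\<in>Hom c c'. \<forall>g\<in>Hom c' c''.
        ((f, f') \<in> R c' \<and> f \<noteq> f') \<longrightarrow>
        ((cmp g f, cmp g f') \<in> R c'' \<and> cmp g f \<noteq> cmp g f'))"

text \<open>Noetherianity of the poset |c/C|, stated on representatives.\<close>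
definition noetherian_under :: "'o set \<Rightarrow> ('o \<Rightarrow> 'o \<Rightarrow> 'm set) \<Rightarrow> ('m \<Rightarrow> 'm \<Rightarrow> 'm) \<Rightarrow> 'o \<Rightarrow> bool" where
  "noetherian_under Ob Hom cmp c \<longleftrightarrow>
     (\<forall>x :: nat \<Rightarrow> 'm. (\<forall>k. x k \<in> out_mor Ob Hom c) \<longrightarrow>
        (\<exists>i j. i < j \<and> mor_le Ob Hom cmp c (x i) (x j)))"

definition groebner :: "'o set \<Rightarrow> ('o \<Rightarrow> 'o \<Rightarrow> 'm set) \<Rightarrow> ('m \<Rightarrow> 'm \<Rightarrow> 'm) \<Rightarrow> bool" where
  "groebner Ob Hom cmp \<longleftrightarrow>
     (\<forall>c\<in>Ob. (\<exists>R. admissible_order Ob Hom cmp c R) \<and> noetherian_under Ob Hom cmp c)"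

text \<open>A morphism n -> m is a tuple (n, m, f, g): f the surjection {1..n} -> {1..m}
  (extended by 0 outside {1..n}), g the grading {1..m} -> nat (extended by 0).\<close>
type_synonym gos_mor = "nat \<times> nat \<times> (nat \<Rightarrow> nat) \<times> (nat \<Rightarrow> nat)"

definition gOS_Hom :: "nat \<Rightarrow> nat \<Rightarrow> gos_mor set" where
  "gOS_Hom n m = {(n', m', f, g). n' = n \<and> m' = m \<and>
      f ` {1..n} = {1..m} \<and>
      (\<forall>x. x \<notin> {1..n} \<longrightarrow> f x = 0) \<and>
      (\<forall>i\<in>{1..m}. \<forall>j\<in>{1..m}. i < j \<longrightarrow>
          Min {x\<in>{1..n}. f x = i} < Min {x\<in>{1..n}. f x = j}) \<and>
      (\<forall>y. y \<notin> {1..m} \<longrightarrow> g y = 0)}"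

definition gOS_comp :: "gos_mor \<Rightarrow> gos_mor \<Rightarrow> gos_mor" where
  "gOS_comp h f = (case f of (n, m, ff, gf) \<Rightarrow> case h of (_, k, hh, gh) \<Rightarrow>
      (n, k, (\<lambda>x. if x \<in> {1..n} then hh (ff x) else 0),
             (\<lambda>i. if i \<in> {1..k} then gh i + (\<Sum>j\<in>{j\<in>{1..m}. hh j = i}. gf j) else 0)))"

definition gOSop_Hom :: "nat \<Rightarrow> nat \<Rightarrow> gos_mor set" where
  "gOSop_Hom c c' = gOS_Hom c' c"

definition gOSop_comp :: "gos_mor \<Rightarrow> gos_mor \<Rightarrow> gos_mor" where
  "gOSop_comp g f = gOS_comp f g"

end

theory Submission
  imports Defs "HOL-Library.Ramsey" "HOL-Library.Sublist"
begin

definition mf :: "(nat \<Rightarrow> nat) \<Rightarrow> nat \<Rightarrow> nat \<Rightarrow> nat" where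
  "mf F N i = Min {x\<in>{1..N}. F x = i}"

definition oss :: "(nat \<Rightarrow> nat) \<Rightarrow> nat \<Rightarrow> nat \<Rightarrow> bool" where
  "oss F N M \<longleftrightarrow> F ` {1..N} = {1..M} \<and> (\<forall>x. x \<notin> {1..N} \<longrightarrow> F x = 0) \<and>
     (\<forall>i\<in>{1..M}. \<forall>j\<in>{1..M}. i < j \<longrightarrow> mf F N i < mf F N j)"

lemma mem_gOS_Hom:
  "(N', M', F, G) \<in> gOS_Hom N M \<longleftrightarrow> N' = N \<and> M' = M \<and> oss F N M \<and> (\<forall>y. y \<notin> {1..M} \<longrightarrow> G y = 0)"
  unfolding gOS_Hom_def oss_def mf_def by auto

lemma oss_range: "oss F N M \<Longrightarrow> x \<in> {1..N} \<Longrightarrow> F x \<in> {1..M}"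
  unfolding oss_def by blast

lemma mf_in: assumes "oss F N M" "i \<in> {1..M}"
  shows "mf F N i \<in> {1..N} \<and> F (mf F N i) = i"
proof -
  have ne: "{x\<in>{1..N}. F x = i} \<noteq> {}" using assms unfolding oss_def by (metis (mono_tags, lifting) empty_iff imageE mem_Collect_eq)
  have "mf F N i \<in> {x\<in>{1..N}. F x = i}" unfolding mf_def by (rule Min_in) (use ne in auto)
  then show ?thesis by auto
qed

lemma mf_le: "x \<in> {1..N} \<Longrightarrow> F x = i \<Longrightarrow> mf F N i \<le> x"
  unfolding mf_def by (rule Min_le) auto

lemma mf_eqI: "x0 \<in> {1..N} \<Longrightarrow> F x0 = i \<Longrightarrow> (\<And>x. x \<in> {1..N} \<Longrightarrow> F x = i \<Longrightarrow> x0 \<le> x) \<Longrightarrow> mf F N i = x0"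
  unfolding mf_def by (rule Min_eqI) auto

lemma mf_mono: "oss F N M \<Longrightarrow> i \<in> {1..M} \<Longrightarrow> j \<in> {1..M} \<Longrightarrow> i < j \<Longrightarrow> mf F N i < mf F N j"
  unfolding oss_def by blast

lemma mf_mono_le: "oss F N M \<Longrightarrow> i \<in> {1..M} \<Longrightarrow> j \<in> {1..M} \<Longrightarrow> i \<le> j \<Longrightarrow> mf F N i \<le> mf F N j"
  using mf_mono[of F N M i j] by (cases "i = j") auto

lemma before_first: assumes "oss F N M" "x \<in> {1..N}" "i \<in> {1..M}" "x < mf F N i"
  shows "F x < i"
proof (rule ccontr)
  assume "\<not> F x < i"
  hence le: "i \<le> F x" by simp
  have r: "F x \<in> {1..M}" using oss_range assms by blast
  have "mf F N i \<le> mf F N (F x)" using mf_mono_le[OF assms(1) assms(3) r le] .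
  also have "\<dots> \<le> x" using mf_le assms(2) by blast
  finally show False using assms(4) by simp
qed

lemma oss_comp: assumes F: "oss F N M" and G: "oss G N'' N"
  shows "oss (\<lambda>x. if x \<in> {1..N''} then F (G x) else 0) N'' M"
    and "\<And>i. i \<in> {1..M} \<Longrightarrow> mf (\<lambda>x. if x \<in> {1..N''} then F (G x) else 0) N'' i = mf G N'' (mf F N i)"
proof -
  let ?H = "\<lambda>x. if x \<in> {1..N''} then F (G x) else 0"
  have mfH: "mf ?H N'' i = mf G N'' (mf F N i)" if i: "i \<in> {1..M}" for i
  proof (rule mf_eqI)
    have b0: "mf F N i \<in> {1..N} \<and> F (mf F N i) = i" using mf_in[OF F i] .
    have x0: "mf G N'' (mf F N i) \<in> {1..N''} \<and> G (mf G N'' (mf F N i)) = mf F N i"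
      using mf_in[OF G] b0 by blast
    show "mf G N'' (mf F N i) \<in> {1..N''}" using x0 by blast
    show "?H (mf G N'' (mf F N i)) = i" using x0 b0 by simp
    fix x assume x: "x \<in> {1..N''}" "?H x = i"
    hence Gx: "G x \<in> {1..N}" "F (G x) = i" using oss_range[OF G] by auto
    have "mf F N i \<le> G x" using mf_le Gx by blast
    hence "mf G N'' (mf F N i) \<le> mf G N'' (G x)" using mf_mono_le[OF G] b0 Gx by blast
    also have "\<dots> \<le> x" using mf_le x by blast
    finally show "mf G N'' (mf F N i) \<le> x" .
  qed
  then show "\<And>i. i \<in> {1..M} \<Longrightarrow> mf ?H N'' i = mf G N'' (mf F N i)" .
  have img: "?H ` {1..N''} = {1..M}"
  proof -
    have "?H ` {1..N''} = F ` (G ` {1..N''})" by (auto simp: image_iff)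
    also have "\<dots> = {1..M}" using F G unfolding oss_def by simp
    finally show ?thesis .
  qed
  show "oss ?H N'' M"
    unfolding oss_def
  proof (intro conjI ballI allI impI)
    show "?H ` {1..N''} = {1..M}" by (rule img)
    fix x assume "x \<notin> {1..N''}" then show "?H x = 0" by auto
  next
    fix i j assume ij: "i \<in> {1..M}" "j \<in> {1..M}" "i < j"
    have "mf F N i < mf F N j" using mf_mono[OF F ij] .
    moreover have "mf F N i \<in> {1..N}" "mf F N j \<in> {1..N}" using mf_in[OF F] ij by auto
    ultimately have "mf G N'' (mf F N i) < mf G N'' (mf F N j)" using mf_mono[OF G] by blast
    then show "mf ?H N'' i < mf ?H N'' j" using mfH ij by simp
  qed
qed

lemma comp_closed: assumes "x \<in> gOS_Hom n c" "h \<in> gOS_Hom n'' n"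
  shows "gOS_comp x h \<in> gOS_Hom n'' c"
proof -
  obtain F G where x: "x = (n, c, F, G)" "oss F n c" "\<forall>y. y \<notin> {1..c} \<longrightarrow> G y = 0"
    using assms(1) by (cases x) (auto simp: mem_gOS_Hom)
  obtain F' G' where h: "h = (n'', n, F', G')" "oss F' n'' n"
    using assms(2) by (cases h) (auto simp: mem_gOS_Hom)
  show ?thesis using x h oss_comp(1)[OF x(2) h(2)] by (simp add: gOS_comp_def mem_gOS_Hom)
qed


definition key :: "gos_mor \<Rightarrow> nat list" where
  "key x = (case x of (n, m, f, g) \<Rightarrow> map f [1..<Suc n] @ map g [1..<Suc m])"

abbreviation Rlt :: "(nat list \<times> nat list) set" where
  "Rlt \<equiv> lenlex {(u, v). u < v}"

lemma key_len: "length (key (n, m, f, g)) = n + m"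
  by (simp add: key_def)

lemma key_nth: "q < n + m \<Longrightarrow> key (n, m, f, g) ! q = (if q < n then f (Suc q) else g (Suc (q - n)))"
  by (simp add: key_def nth_append del: upt_Suc)

lemma lenlex_nth:
  assumes "length xs = length ys"
  shows "(xs, ys) \<in> Rlt \<longleftrightarrow> (\<exists>p<length xs. (\<forall>q<p. xs ! q = ys ! q) \<and> xs ! p < ys ! p)"
proof
  assume "(xs, ys) \<in> Rlt"
  then obtain xys x y xs' ys' where d: "xs = xys @ x # xs'" "ys = xys @ y # ys'" "x < y"
    using assms by (auto simp: lenlex_conv lex_conv)
  show "\<exists>p<length xs. (\<forall>q<p. xs ! q = ys ! q) \<and> xs ! p < ys ! p"
    by (rule exI[of _ "length xys"]) (simp add: d nth_append)
next
  assume "\<exists>p<length xs. (\<forall>q<p. xs ! q = ys ! q) \<and> xs ! p < ys ! p"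
  then obtain p where p: "p < length xs" "\<forall>q<p. xs ! q = ys ! q" "xs ! p < ys ! p" by blast
  have t: "take p xs = take p ys" using p assms by (intro nth_equalityI) auto
  have "xs = take p xs @ xs ! p # drop (Suc p) xs" using p(1) by (simp add: id_take_nth_drop)
  moreover have "ys = take p xs @ ys ! p # drop (Suc p) ys" using p(1) assms t by (metis id_take_nth_drop)
  ultimately show "(xs, ys) \<in> Rlt" using assms p(3) unfolding lenlex_conv lex_conv by blast
qed

lemma oss_zero: "oss F N M \<Longrightarrow> x \<notin> {1..N} \<Longrightarrow> F x = 0"
  unfolding oss_def by blast

lemma key_inj: assumes "x \<in> gOS_Hom n m" "y \<in> gOS_Hom n m" "key x = key y" shows "x = y"
proof -
  obtain F G where x: "x = (n, m, F, G)" "oss F n m" "\<forall>y. y \<notin> {1..m} \<longrightarrow> G y = 0"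
    using assms(1) by (cases x) (auto simp: mem_gOS_Hom)
  obtain F' G' where y: "y = (n, m, F', G')" "oss F' n m" "\<forall>y. y \<notin> {1..m} \<longrightarrow> G' y = 0"
    using assms(2) by (cases y) (auto simp: mem_gOS_Hom)
  have "map F [1..<Suc n] = map F' [1..<Suc n] \<and> map G [1..<Suc m] = map G' [1..<Suc m]"
    using assms(3) x y unfolding key_def by (simp add: append_eq_append_conv)
  hence e: "\<forall>p\<in>{1..n}. F p = F' p" "\<forall>p\<in>{1..m}. G p = G' p"
    by (auto simp: map_eq_conv)
  have "F = F'" using e(1) x(2) y(2) unfolding oss_def by (metis ext)
  moreover have "G = G'" using e(2) x(3) y(3) by (metis ext)
  ultimately show ?thesis using x y by simp
qed

lemma comp_mono:
  assumes x: "x \<in> gOS_Hom n c" and x': "x' \<in> gOS_Hom n c" and h: "h \<in> gOS_Hom n'' n"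
    and lt: "(key x, key x') \<in> Rlt"
  shows "(key (gOS_comp x h), key (gOS_comp x' h)) \<in> Rlt"
proof -
  obtain F G where xd: "x = (n, c, F, G)" "oss F n c"
    using x by (cases x) (auto simp: mem_gOS_Hom)
  obtain F' G' where x'd: "x' = (n, c, F', G')" "oss F' n c"
    using x' by (cases x') (auto simp: mem_gOS_Hom)
  obtain Hf Hg where hd: "h = (n'', n, Hf, Hg)" "oss Hf n'' n"
    using h by (cases h) (auto simp: mem_gOS_Hom)
  define S :: "(nat \<Rightarrow> nat) \<Rightarrow> nat \<Rightarrow> nat" where "S F a = (\<Sum>j\<in>{j\<in>{1..n}. F j = a}. Hg j)" for F a
  have cx: "gOS_comp x h = (n'', c, \<lambda>r. if r \<in> {1..n''} then F (Hf r) else 0, \<lambda>a. if a \<in> {1..c} then G a + S F a else 0)"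
    unfolding S_def by (simp add: gOS_comp_def xd hd)
  have cx': "gOS_comp x' h = (n'', c, \<lambda>r. if r \<in> {1..n''} then F' (Hf r) else 0, \<lambda>a. if a \<in> {1..c} then G' a + S F' a else 0)"
    unfolding S_def by (simp add: gOS_comp_def x'd hd)
  from lt obtain p where p: "p < n + c" "\<forall>q<p. key x ! q = key x' ! q" "key x ! p < key x' ! p"
    using lenlex_nth[of "key x" "key x'"] by (auto simp: xd x'd key_len)
  have eqq: "\<And>q. q < p \<Longrightarrow> (if q < n then F (Suc q) else G (Suc (q - n))) = (if q < n then F' (Suc q) else G' (Suc (q - n)))"
    using p(1,2) by (auto simp: xd x'd key_nth)
  have ltp: "(if p < n then F (Suc p) else G (Suc (p - n))) < (if p < n then F' (Suc p) else G' (Suc (p - n)))"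
    using p(1,3) by (auto simp: xd x'd key_nth)
  show ?thesis
    unfolding cx cx'
  proof (subst lenlex_nth, simp add: key_len)
    show "\<exists>pa<length (key (n'', c, \<lambda>r. if r \<in> {1..n''} then F (Hf r) else 0, \<lambda>a. if a \<in> {1..c} then G a + S F a else 0)).
       (\<forall>q<pa. key (n'', c, \<lambda>r. if r \<in> {1..n''} then F (Hf r) else 0, \<lambda>a. if a \<in> {1..c} then G a + S F a else 0) ! q =
               key (n'', c, \<lambda>r. if r \<in> {1..n''} then F' (Hf r) else 0, \<lambda>a. if a \<in> {1..c} then G' a + S F' a else 0) ! q) \<and>
       key (n'', c, \<lambda>r. if r \<in> {1..n''} then F (Hf r) else 0, \<lambda>a. if a \<in> {1..c} then G a + S F a else 0) ! pa
       < key (n'', c, \<lambda>r. if r \<in> {1..n''} then F' (Hf r) else 0, \<lambda>a. if a \<in> {1..c} then G' a + S F' a else 0) ! pa"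
    proof (cases "p < n")
      case True
      define P where "P = Suc p"
      have P: "P \<in> {1..n}" using True P_def by auto
      define r0 where "r0 = mf Hf n'' P"
      have r0: "r0 \<in> {1..n''}" "Hf r0 = P" using mf_in[OF hd(2) P] r0_def by auto
      have FP: "F P < F' P" using ltp True P_def by simp
      have before: "F (Hf r) = F' (Hf r)" if r: "r \<in> {1..n''}" "r < r0" for r
      proof -
        have "Hf r < P" using before_first[OF hd(2) r(1) P] r(2) r0_def by simp
        moreover have "Hf r \<in> {1..n}" using oss_range[OF hd(2) r(1)] .
        ultimately have "Hf r - 1 < p" "Hf r - 1 < n" using P_def True by auto
        then have "F (Suc (Hf r - 1)) = F' (Suc (Hf r - 1))" using eqq by fastforce
        then show ?thesis using \<open>Hf r \<in> {1..n}\<close> by simp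
      qed
      show ?thesis
      proof (intro exI[of _ "r0 - 1"] conjI allI impI)
        show "r0 - 1 < length (key (n'', c, \<lambda>r. if r \<in> {1..n''} then F (Hf r) else 0, \<lambda>a. if a \<in> {1..c} then G a + S F a else 0))"
          using r0 by (auto simp: key_len)
        fix q assume q: "q < r0 - 1"
        then show "key (n'', c, \<lambda>r. if r \<in> {1..n''} then F (Hf r) else 0, \<lambda>a. if a \<in> {1..c} then G a + S F a else 0) ! q =
               key (n'', c, \<lambda>r. if r \<in> {1..n''} then F' (Hf r) else 0, \<lambda>a. if a \<in> {1..c} then G' a + S F' a else 0) ! q"
        proof -
          have qq: "q < n'' + c" "q < n''" using q r0 by auto
          then show ?thesis using before[of "Suc q"] q by (simp add: key_nth)
        qed
      next
        show "key (n'', c, \<lambda>r. if r \<in> {1..n''} then F (Hf r) else 0, \<lambda>a. if a \<in> {1..c} then G a + S F a else 0) ! (r0 - 1)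
          < key (n'', c, \<lambda>r. if r \<in> {1..n''} then F' (Hf r) else 0, \<lambda>a. if a \<in> {1..c} then G' a + S F' a else 0) ! (r0 - 1)"
        proof -
          have qq: "r0 - 1 < n'' + c" "r0 - 1 < n''" using r0 by auto
          have s: "Suc (r0 - 1) = r0" using r0 by auto
          have "Suc (r0 - 1) \<in> {1..n''}" using r0 s by simp
          then show ?thesis using qq s r0(2) FP by (simp only: key_nth if_True)
        qed
      qed
    next
      case False
      have e1: "F (Suc q) = F' (Suc q)" if "q < n" for q
      proof -
        have "q < p" using that False by simp
        from eqq[OF this] show ?thesis using that by simp
      qed
      have FF: "F = F'"
      proof
        fix q show "F q = F' q"
        proof (cases "q \<in> {1..n}")
          case True
          then obtain k where "q = Suc k" "k < n" by (cases q) auto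
          then show ?thesis using e1 by simp
        next
          case False
          then show ?thesis using oss_zero[OF xd(2)] oss_zero[OF x'd(2)] by simp
        qed
      qed
      have Geq: "G (Suc (q - n)) = G' (Suc (q - n))" if "q < p" "n \<le> q" for q
        using eqq[of q] that by simp
      have Glt: "G (Suc (p - n)) < G' (Suc (p - n))" using ltp False by simp
      show ?thesis
      proof (intro exI[of _ "n'' + (p - n)"] conjI allI impI)
        show "n'' + (p - n) < length (key (n'', c, \<lambda>r. if r \<in> {1..n''} then F (Hf r) else 0, \<lambda>a. if a \<in> {1..c} then G a + S F a else 0))"
          using p(1) False by (simp add: key_len)
        fix q assume q: "q < n'' + (p - n)"
        show "key (n'', c, \<lambda>r. if r \<in> {1..n''} then F (Hf r) else 0, \<lambda>a. if a \<in> {1..c} then G a + S F a else 0) ! q =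
               key (n'', c, \<lambda>r. if r \<in> {1..n''} then F' (Hf r) else 0, \<lambda>a. if a \<in> {1..c} then G' a + S F' a else 0) ! q"
        proof (cases "q < n''")
          case True then show ?thesis using q p(1) FF by (simp add: key_nth)
        next
          case qF: False
          have "G (Suc (n + (q - n'') - n)) = G' (Suc (n + (q - n'') - n))"
            by (rule Geq) (use q qF False in auto)
          moreover have "Suc (q - n'') \<le> c" using q p(1) qF False by arith
          ultimately show ?thesis using q p(1) FF qF False by (simp add: key_nth)
        qed
      next
        show "key (n'', c, \<lambda>r. if r \<in> {1..n''} then F (Hf r) else 0, \<lambda>a. if a \<in> {1..c} then G a + S F a else 0) ! (n'' + (p - n))
          < key (n'', c, \<lambda>r. if r \<in> {1..n''} then F' (Hf r) else 0, \<lambda>a. if a \<in> {1..c} then G' a + S F' a else 0) ! (n'' + (p - n))"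
        proof -
          have "Suc (p - n) \<le> c" "\<not> n'' + (p - n) < n''" using p(1) False by arith+
          then show ?thesis using p(1) False Glt FF by (simp add: key_nth)
        qed
      qed
    qed
  qed
qed

definition Rord :: "nat \<Rightarrow> nat \<Rightarrow> (gos_mor \<times> gos_mor) set" where
  "Rord c n = {(x, y). x \<in> gOS_Hom n c \<and> y \<in> gOS_Hom n c \<and> (x = y \<or> (key x, key y) \<in> Rlt)}"

lemma Rlt_trans: "trans Rlt"
  by (rule lenlex_transI) (auto simp: trans_def)

lemma Rlt_irrefl: "(xs, xs) \<notin> Rlt"
  by (rule lenlex_irreflexive) simp

lemma Rlt_total: "xs \<noteq> ys \<Longrightarrow> (xs, ys) \<in> Rlt \<or> (ys, xs) \<in> Rlt"
proof -
  have "total (lenlex {(u, v::nat). u < v})" by (rule total_lenlex) (auto simp: total_on_def)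
  then show "xs \<noteq> ys \<Longrightarrow> ?thesis" unfolding total_on_def by blast
qed

lemma Rord_wo: "well_order_on (gOS_Hom n c) (Rord c n)"
  unfolding well_order_on_def linear_order_on_def partial_order_on_def preorder_on_def
proof (intro conjI)
  show "Rord c n \<subseteq> gOS_Hom n c \<times> gOS_Hom n c" by (auto simp: Rord_def)
  show "refl_on (gOS_Hom n c) (Rord c n)" by (auto simp: Rord_def refl_on_def)
  show "trans (Rord c n)" unfolding trans_def Rord_def using Rlt_trans[unfolded trans_def] by blast
  show "antisym (Rord c n)" unfolding antisym_def Rord_def
    using Rlt_trans[unfolded trans_def] Rlt_irrefl by blast
  show "total_on (gOS_Hom n c) (Rord c n)" unfolding total_on_def Rord_def
    using Rlt_total key_inj by blast
  have "Rord c n - Id \<subseteq> inv_image Rlt key" by (auto simp: Rord_def)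
  moreover have "wf (inv_image Rlt key)" by (intro wf_inv_image wf_lenlex wf_less)
  ultimately show "wf (Rord c n - Id)" by (rule wf_subset[rotated])
qed

lemma admissible: "admissible_order (UNIV :: nat set) gOSop_Hom gOSop_comp c (Rord c)"
  unfolding admissible_order_def gOSop_Hom_def gOSop_comp_def
proof (intro conjI ballI impI)
  fix c' show "well_order_on (gOS_Hom c' c) (Rord c c')" by (rule Rord_wo)
next
  fix c' c'' f f' g
  assume f: "f \<in> gOS_Hom c' c" and f': "f' \<in> gOS_Hom c' c" and g: "g \<in> gOS_Hom c'' c'"
    and lt: "(f, f') \<in> Rord c c' \<and> f \<noteq> f'"
  have "(key f, key f') \<in> Rlt" using lt by (auto simp: Rord_def)
  hence "(key (gOS_comp f g), key (gOS_comp f' g)) \<in> Rlt" using comp_mono f f' g by blast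
  moreover have "gOS_comp f g \<in> gOS_Hom c'' c" "gOS_comp f' g \<in> gOS_Hom c'' c"
    using comp_closed f f' g by blast+
  ultimately show "(gOS_comp f g, gOS_comp f' g) \<in> Rord c c''" "gOS_comp f g \<noteq> gOS_comp f' g"
    using Rlt_irrefl by (auto simp: Rord_def)
qed


definition goodseq :: "('a \<Rightarrow> 'a \<Rightarrow> bool) \<Rightarrow> (nat \<Rightarrow> 'a) \<Rightarrow> bool" where
  "goodseq P s \<longleftrightarrow> (\<exists>i j. i < j \<and> P (s i) (s j))"

definition wqo_on :: "('a \<Rightarrow> 'a \<Rightarrow> bool) \<Rightarrow> 'a set \<Rightarrow> bool" where
  "wqo_on P A \<longleftrightarrow> (\<forall>s. (\<forall>i. s i \<in> A) \<longrightarrow> goodseq P s)"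

lemma wqo_chain:
  fixes s :: "nat \<Rightarrow> 'a"
  assumes w: "wqo_on P A" and s: "\<And>i. s i \<in> A"
  shows "\<exists>\<phi>::nat\<Rightarrow>nat. strict_mono \<phi> \<and> (\<forall>i j. i < j \<longrightarrow> P (s (\<phi> i)) (s (\<phi> j)))"
proof -
  define f where "f X = (if P (s (Min X)) (s (Max X)) then 0 else 1::nat)" for X :: "nat set"
  have "\<exists>Y t. Y \<subseteq> UNIV \<and> infinite Y \<and> t < 2 \<and> (\<forall>x\<in>Y. \<forall>y\<in>Y. x \<noteq> y \<longrightarrow> f {x, y} = t)"
    by (rule Ramsey2) (auto simp: f_def)
  then obtain Y t where Y: "infinite Y" "t < 2" "\<forall>x\<in>Y. \<forall>y\<in>Y. x \<noteq> y \<longrightarrow> f {x, y} = t" by blast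
  define \<phi> where "\<phi> = enumerate Y"
  have sm: "strict_mono \<phi>"
  proof (rule strict_monoI)
    fix m n :: nat assume "m < n" then show "\<phi> m < \<phi> n" unfolding \<phi>_def using Y(1) by (rule enumerate_mono)
  qed
  have inY: "\<phi> i \<in> Y" for i unfolding \<phi>_def by (rule enumerate_in_set[OF Y(1)])
  have fv: "f {\<phi> i, \<phi> j} = (if P (s (\<phi> i)) (s (\<phi> j)) then 0 else 1)" if "i < j" for i j
  proof -
    have lt: "\<phi> i < \<phi> j" using sm that by (simp add: strict_mono_less)
    have "Min {\<phi> i, \<phi> j} = \<phi> i" "Max {\<phi> i, \<phi> j} = \<phi> j" using lt by auto
    then show ?thesis unfolding f_def by simp
  qed
  have ft: "f {\<phi> i, \<phi> j} = t" if "i < j" for i j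
  proof -
    have "\<phi> i \<noteq> \<phi> j" using sm that by (simp add: strict_mono_eq)
    then show ?thesis using Y(3) inY[of i] inY[of j] by simp
  qed
  have "\<forall>i. (s \<circ> \<phi>) i \<in> A" using s by simp
  with w have "goodseq P (s \<circ> \<phi>)" unfolding wqo_on_def by (elim allE[of _ "s \<circ> \<phi>"]) simp
  then obtain i j where ij: "i < j" "P (s (\<phi> i)) (s (\<phi> j))" unfolding goodseq_def by auto
  hence "t = 0" using fv[OF ij(1)] ft[OF ij(1)] by simp
  have chn: "\<forall>i j. i < j \<longrightarrow> P (s (\<phi> i)) (s (\<phi> j))"
  proof (intro allI impI)
    fix i j :: nat assume "i < j"
    from fv[OF this] ft[OF this] \<open>t = 0\<close> show "P (s (\<phi> i)) (s (\<phi> j))" by (auto split: if_splits)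
  qed
  show ?thesis by (rule exI[of _ \<phi>]) (use sm chn in simp)
qed

locale higman_ctx =
  fixes P :: "'a \<Rightarrow> 'a \<Rightarrow> bool" and A :: "'a set"
  assumes wqo: "wqo_on P A"
begin

abbreviation "Q \<equiv> list_emb P"
abbreviation "L \<equiv> lists A"

definition bad :: "(nat \<Rightarrow> 'a list) \<Rightarrow> bool" where
  "bad s \<longleftrightarrow> (\<forall>i. s i \<in> L) \<and> \<not> goodseq Q s"

definition ok :: "'a list list \<Rightarrow> bool" where
  "ok xs \<longleftrightarrow> (\<exists>s. bad s \<and> (\<forall>k<length xs. s k = xs ! k))"

definition step :: "'a list list \<Rightarrow> 'a list" where
  "step xs = (SOME w. ok (xs @ [w]) \<and> (\<forall>w'. ok (xs @ [w']) \<longrightarrow> length w \<le> length w'))"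

lemma step_ok: assumes "ok xs"
  shows "ok (xs @ [step xs]) \<and> (\<forall>w'. ok (xs @ [w']) \<longrightarrow> length (step xs) \<le> length w')"
proof -
  obtain s where s: "bad s" "\<forall>k<length xs. s k = xs ! k" using assms unfolding ok_def by blast
  have "ok (xs @ [s (length xs)])" unfolding ok_def
    by (rule exI[of _ s]) (use s in \<open>auto simp: nth_append less_Suc_eq\<close>)
  then have "\<exists>w. ok (xs @ [w]) \<and> (\<forall>w'. ok (xs @ [w']) \<longrightarrow> length w \<le> length w')"
    by (rule ex_has_least_nat)
  then show ?thesis unfolding step_def by (rule someI_ex)
qed

primrec pre :: "nat \<Rightarrow> 'a list list" where
  "pre 0 = []"
| "pre (Suc n) = pre n @ [step (pre n)]"

lemma len_pre: "length (pre n) = n"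
  by (induct n) auto

lemma nth_pre: "k < n \<Longrightarrow> pre n ! k = step (pre k)"
proof (induct n)
  case 0 then show ?case by simp
next
  case (Suc n) then show ?case by (auto simp: nth_append len_pre less_Suc_eq)
qed

definition mseq :: "nat \<Rightarrow> 'a list" where
  "mseq n = step (pre n)"

lemma ok_pre: "\<exists>s. bad s \<Longrightarrow> ok (pre n)"
proof (induct n)
  case 0 then show ?case by (simp add: ok_def)
next
  case (Suc n) then show ?case using step_ok by simp
qed

lemma higman_aux: assumes ex: "\<exists>s. bad s" shows False
proof -
  have agree: "\<exists>s. bad s \<and> (\<forall>k\<le>j. s k = mseq k)" for j
  proof -
    have "ok (pre (Suc j))" using ok_pre[OF ex] .
    then obtain s where "bad s" "\<forall>k<Suc j. s k = pre (Suc j) ! k" unfolding ok_def len_pre by blast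
    then show ?thesis using nth_pre[of _ "Suc j"] unfolding mseq_def by auto
  qed
  have mL: "mseq i \<in> L" for i
  proof -
    obtain s where "bad s" "\<forall>k\<le>i. s k = mseq k" using agree by blast
    then show ?thesis unfolding bad_def by (metis order_refl)
  qed
  have mbad: "\<not> Q (mseq i) (mseq j)" if "i < j" for i j
  proof -
    obtain s where "bad s" "\<forall>k\<le>j. s k = mseq k" using agree by blast
    moreover have "s i = mseq i" "s j = mseq j" using that \<open>\<forall>k\<le>j. s k = mseq k\<close> by auto
    moreover have "\<not> Q (s i) (s j)" using \<open>bad s\<close> that unfolding bad_def goodseq_def by blast
    ultimately show ?thesis by simp
  qed
  have minimal: "length (mseq n) \<le> length (s n)" if "bad s" "\<forall>k<n. s k = mseq k" for s n
  proof -
    have "ok (pre n @ [s n])" unfolding ok_def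
      by (rule exI[of _ s]) (use that in \<open>auto simp: nth_append len_pre less_Suc_eq nth_pre mseq_def\<close>)
    then show ?thesis using step_ok[OF ok_pre[OF ex, of n]] unfolding mseq_def by blast
  qed
  have ne: "mseq n \<noteq> []" for n
  proof
    assume "mseq n = []"
    then have "Q (mseq n) (mseq (Suc n))" by simp
    then show False using mbad[of n "Suc n"] by simp
  qed
  define a where "a n = hd (mseq n)" for n
  define v where "v n = tl (mseq n)" for n
  have mav: "mseq n = a n # v n" for n using ne[of n] unfolding a_def v_def by simp
  have aA: "a n \<in> A" for n using mL[of n] mav[of n] by (metis Cons_in_lists_iff)
  have vL: "v n \<in> L" for n using mL[of n] mav[of n] by (metis Cons_in_lists_iff)
  have "\<exists>\<phi>::nat\<Rightarrow>nat. strict_mono \<phi> \<and> (\<forall>i j. i < j \<longrightarrow> P (a (\<phi> i)) (a (\<phi> j)))"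
    by (rule wqo_chain[OF wqo aA])
  then obtain \<phi> :: "nat \<Rightarrow> nat" where sm: "strict_mono \<phi>" and ch: "\<forall>i j. i < j \<longrightarrow> P (a (\<phi> i)) (a (\<phi> j))"
    by (elim exE conjE)
  have phi_ge: "\<phi> 0 \<le> \<phi> k" for k using sm by (simp add: strict_mono_less_eq)
  define s' where "s' k = (if k < \<phi> 0 then mseq k else v (\<phi> (k - \<phi> 0)))" for k
  have s'L: "s' k \<in> L" for k unfolding s'_def using mL vL by auto
  have "length (s' (\<phi> 0)) < length (mseq (\<phi> 0))" unfolding s'_def using mav[of "\<phi> 0"] by simp
  moreover have "\<forall>k<\<phi> 0. s' k = mseq k" unfolding s'_def by simp
  ultimately have "\<not> bad s'" using minimal[of s' "\<phi> 0"] by (meson not_le)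
  then obtain i j where ij: "i < j" "Q (s' i) (s' j)" using s'L unfolding bad_def goodseq_def by blast
  show False
  proof (cases "j < \<phi> 0")
    case True
    then show False using ij mbad[of i j] unfolding s'_def by simp
  next
    case jF: False
    show False
    proof (cases "i < \<phi> 0")
      case True
      then have "Q (mseq i) (v (\<phi> (j - \<phi> 0)))" using ij jF unfolding s'_def by simp
      then have "Q (mseq i) (mseq (\<phi> (j - \<phi> 0)))" using mav by (simp add: list_emb_Cons)
      moreover have "i < \<phi> (j - \<phi> 0)" using True phi_ge[of "j - \<phi> 0"] by simp
      ultimately show False using mbad by blast
    next
      case False
      then have "Q (v (\<phi> (i - \<phi> 0))) (v (\<phi> (j - \<phi> 0)))" using ij jF unfolding s'_def by simp
      moreover have "i - \<phi> 0 < j - \<phi> 0" using ij(1) False by simp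
      ultimately have "Q (mseq (\<phi> (i - \<phi> 0))) (mseq (\<phi> (j - \<phi> 0)))"
        using ch mav by (simp add: list_emb_Cons2)
      moreover have "\<phi> (i - \<phi> 0) < \<phi> (j - \<phi> 0)" using sm \<open>i - \<phi> 0 < j - \<phi> 0\<close> by (simp add: strict_mono_less)
      ultimately show False using mbad by blast
    qed
  qed
qed

lemma higman: "wqo_on Q L"
  unfolding wqo_on_def using higman_aux unfolding bad_def by blast

end

lemma higman_lemma: "wqo_on P A \<Longrightarrow> wqo_on (list_emb P) (lists A)"
  using higman_ctx.higman higman_ctx.intro by blast


definition Pl :: "nat \<times> bool \<times> nat \<Rightarrow> nat \<times> bool \<times> nat \<Rightarrow> bool" where
  "Pl x y \<longleftrightarrow> fst x = fst y \<and> fst (snd x) = fst (snd y) \<and> snd (snd x) \<le> snd (snd y)"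

lemma alpha_wqo: "wqo_on Pl ({1..c} \<times> (UNIV :: bool set) \<times> (UNIV :: nat set))"
  unfolding wqo_on_def
proof (intro allI impI)
  fix s :: "nat \<Rightarrow> nat \<times> bool \<times> nat"
  assume s: "\<forall>i. s i \<in> {1..c} \<times> (UNIV :: bool set) \<times> (UNIV :: nat set)"
  define pr where "pr i = (fst (s i), fst (snd (s i)))" for i
  have "pr ` UNIV \<subseteq> {1..c} \<times> (UNIV :: bool set)" using s unfolding pr_def by (auto simp: mem_Times_iff)
  hence fin: "finite (pr ` UNIV)" by (rule finite_subset) simp
  obtain i0 where inf: "infinite {i. pr i = pr i0}"
    using pigeonhole_infinite[OF infinite_UNIV_nat fin] by auto
  define I where "I = {i. pr i = pr i0}"
  obtain i1 where i1: "i1 \<in> I" "\<forall>j. j \<in> I \<longrightarrow> snd (snd (s i1)) \<le> snd (snd (s j))"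
    using ex_has_least_nat[of "\<lambda>i. i \<in> I" i0 "\<lambda>i. snd (snd (s i))"] unfolding I_def by auto
  obtain j where j: "j > i1" "j \<in> I" using inf unfolding I_def[symmetric] infinite_nat_iff_unbounded by blast
  have "Pl (s i1) (s j)" using i1 j unfolding Pl_def I_def pr_def by auto
  then show "goodseq Pl s" unfolding goodseq_def using j(1) by blast
qed

lemma list_emb_idx:
  assumes "list_emb P xs ys"
  shows "\<exists>\<iota>::nat\<Rightarrow>nat. (\<forall>k<length xs. \<iota> k < length ys \<and> P (xs ! k) (ys ! (\<iota> k))) \<and>
            (\<forall>k l. k < l \<longrightarrow> l < length xs \<longrightarrow> \<iota> k < \<iota> l)"
  using assms
proof (induction rule: list_emb.induct)
  case (list_emb_Nil ys)
  then show ?case by simp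
next
  case (list_emb_Cons xs ys y)
  then obtain \<iota> :: "nat \<Rightarrow> nat" where i: "\<forall>k<length xs. \<iota> k < length ys \<and> P (xs ! k) (ys ! (\<iota> k))"
    "\<forall>k l. k < l \<longrightarrow> l < length xs \<longrightarrow> \<iota> k < \<iota> l" by blast
  show ?case by (rule exI[of _ "\<lambda>k. Suc (\<iota> k)"]) (use i in simp)
next
  case (list_emb_Cons2 x y xs ys)
  then obtain \<iota> :: "nat \<Rightarrow> nat" where i: "\<forall>k<length xs. \<iota> k < length ys \<and> P (xs ! k) (ys ! (\<iota> k))"
    "\<forall>k l. k < l \<longrightarrow> l < length xs \<longrightarrow> \<iota> k < \<iota> l" by blast
  show ?case
  proof -
    define j :: "nat \<Rightarrow> nat" where "j k = (case k of 0 \<Rightarrow> 0 | Suc k' \<Rightarrow> Suc (\<iota> k'))" for k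
    have A: "\<forall>k<length (x # xs). j k < length (y # ys) \<and> P ((x # xs) ! k) ((y # ys) ! (j k))"
    proof (intro allI impI)
      fix k assume "k < length (x # xs)"
      then show "j k < length (y # ys) \<and> P ((x # xs) ! k) ((y # ys) ! (j k))"
        using i(1) list_emb_Cons2.hyps(1) by (cases k) (auto simp: j_def)
    qed
    have B: "\<forall>k l. k < l \<longrightarrow> l < length (x # xs) \<longrightarrow> j k < j l"
    proof (intro allI impI)
      fix k l assume "k < l" "l < length (x # xs)"
      then show "j k < j l" using i(2) by (cases k; cases l) (auto simp: j_def)
    qed
    show ?thesis by (intro exI[of _ j] conjI A B)
  qed
qed

definition lab :: "(nat \<Rightarrow> nat) \<Rightarrow> (nat \<Rightarrow> nat) \<Rightarrow> nat \<Rightarrow> nat \<Rightarrow> nat \<times> bool \<times> nat" where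
  "lab F G N p = (F p, mf F N (F p) = p, if mf F N (F p) = p then G (F p) else 0)"

definition word :: "gos_mor \<Rightarrow> (nat \<times> bool \<times> nat) list" where
  "word x = (case x of (n, m, F, G) \<Rightarrow> map (lab F G n) [1..<Suc n])"

lemma word_nth: "k < n \<Longrightarrow> word (n, m, F, G) ! k = lab F G n (Suc k)"
  by (simp add: word_def del: upt_Suc)

lemma word_len: "length (word (n, m, F, G)) = n"
  by (simp add: word_def)

lemma emb_le:
  assumes x: "x = (n, c, F, G)" "x \<in> gOS_Hom n c"
    and y: "y = (n', c, F', G')" "y \<in> gOS_Hom n' c"
    and e: "list_emb Pl (word x) (word y)"
  shows "\<exists>h\<in>gOS_Hom n' n. y = gOS_comp x h"
proof -
  have oF: "oss F n c" and zG: "\<forall>y. y \<notin> {1..c} \<longrightarrow> G y = 0" using x by (auto simp: mem_gOS_Hom)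
  have oF': "oss F' n' c" and zG': "\<forall>y. y \<notin> {1..c} \<longrightarrow> G' y = 0" using y by (auto simp: mem_gOS_Hom)
  obtain \<iota>0 :: "nat \<Rightarrow> nat" where i0: "\<forall>k<n. \<iota>0 k < n' \<and> Pl (word x ! k) (word y ! (\<iota>0 k))"
    "\<forall>k l. k < l \<longrightarrow> l < n \<longrightarrow> \<iota>0 k < \<iota>0 l"
    using list_emb_idx[OF e] unfolding x(1) y(1) word_len by blast
  define \<iota> where "\<iota> p = Suc (\<iota>0 (p - 1))" for p
  have I: "\<iota> p \<in> {1..n'} \<and> Pl (lab F G n p) (lab F' G' n' (\<iota> p))" if p: "p \<in> {1..n}" for p
  proof -
    have "p - 1 < n" using p by auto
    then have "\<iota>0 (p - 1) < n'" "Pl (word x ! (p - 1)) (word y ! (\<iota>0 (p - 1)))" using i0(1) by auto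
    moreover have "Suc (p - 1) = p" using p by auto
    ultimately show ?thesis unfolding \<iota>_def x(1) y(1) using word_nth[of "p - 1" n c F G] word_nth[of "\<iota>0 (p - 1)" n' c F' G'] \<open>p - 1 < n\<close>
      by auto
  qed
  have I1: "\<iota> p \<in> {1..n'}" if "p \<in> {1..n}" for p using I[OF that] by blast
  have I2: "F' (\<iota> p) = F p" if "p \<in> {1..n}" for p using I[OF that] by (simp add: Pl_def lab_def)
  have I3: "(mf F' n' (F' (\<iota> p)) = \<iota> p) = (mf F n (F p) = p)" if "p \<in> {1..n}" for p
  proof -
    have "fst (snd (lab F G n p)) = fst (snd (lab F' G' n' (\<iota> p)))" using I[OF that] unfolding Pl_def by blast
    then show ?thesis by (simp only: lab_def fst_conv snd_conv)
  qed
  have I4: "G (F p) \<le> G' (F p)" if "p \<in> {1..n}" "mf F n (F p) = p" for p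
    using I[OF that(1)] that(2) I2[OF that(1)] I3[OF that(1)] by (auto simp: Pl_def lab_def split: if_splits)
  have I5: "\<iota> p < \<iota> q" if "p \<in> {1..n}" "q \<in> {1..n}" "p < q" for p q
    using i0(2) that unfolding \<iota>_def by auto
  have I5': "p \<le> q" if "p \<in> {1..n}" "q \<in> {1..n}" "\<iota> p \<le> \<iota> q" for p q
    using I5[of q p] that by (meson not_le)
  have imf: "\<iota> (mf F n a) = mf F' n' a" if a: "a \<in> {1..c}" for a
  proof -
    have p: "mf F n a \<in> {1..n}" "F (mf F n a) = a" using mf_in[OF oF a] by auto
    have "mf F n (F (mf F n a)) = mf F n a" using p by simp
    then have "mf F' n' (F' (\<iota> (mf F n a))) = \<iota> (mf F n a)" using I3[OF p(1)] by simp
    then show ?thesis using I2[OF p(1)] p(2) by simp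
  qed
  have Gle: "G a \<le> G' a" if a: "a \<in> {1..c}" for a
  proof -
    have p: "mf F n a \<in> {1..n}" "F (mf F n a) = a" using mf_in[OF oF a] by auto
    then show ?thesis using I4[OF p(1)] by simp
  qed
  define K where "K q = {k\<in>{1..n}. \<iota> k \<le> q \<and> F k = F' q}" for q
  define hh where "hh q = (if q \<in> {1..n'} then Max (K q) else 0)" for q
  have Kne: "mf F n (F' q) \<in> K q" if q: "q \<in> {1..n'}" for q
  proof -
    have a: "F' q \<in> {1..c}" using oss_range[OF oF' q] .
    have "mf F n (F' q) \<in> {1..n}" "F (mf F n (F' q)) = F' q" using mf_in[OF oF a] by auto
    moreover have "\<iota> (mf F n (F' q)) \<le> q" using imf[OF a] mf_le[OF q, of F' "F' q"] by simp
    ultimately show ?thesis unfolding K_def by blast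
  qed
  have finK: "finite (K q)" for q unfolding K_def by simp
  have hhK: "hh q \<in> K q" if q: "q \<in> {1..n'}" for q
    unfolding hh_def using q Kne[OF q] finK[of q] by (auto intro: Max_in)
  have hh_iota: "hh (\<iota> p) = p" if p: "p \<in> {1..n}" for p
  proof -
    have "Max (K (\<iota> p)) = p"
    proof (rule Max_eqI[OF finK])
      show "p \<in> K (\<iota> p)" unfolding K_def using p I2[OF p] by simp
      fix k assume "k \<in> K (\<iota> p)"
      then show "k \<le> p" unfolding K_def using I5' p by blast
    qed
    then show ?thesis unfolding hh_def using I1[OF p] by simp
  qed
  have mfh: "mf hh n' p = \<iota> p" if p: "p \<in> {1..n}" for p
  proof (rule mf_eqI)
    show "\<iota> p \<in> {1..n'}" using I1[OF p] .
    show "hh (\<iota> p) = p" using hh_iota[OF p] .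
    fix q assume q: "q \<in> {1..n'}" "hh q = p"
    then show "\<iota> p \<le> q" using hhK[OF q(1)] unfolding K_def by auto
  qed
  have ossh: "oss hh n' n"
    unfolding oss_def
  proof (intro conjI ballI allI impI)
    show "hh ` {1..n'} = {1..n}"
    proof
      show "hh ` {1..n'} \<subseteq> {1..n}" using hhK unfolding K_def by blast
      show "{1..n} \<subseteq> hh ` {1..n'}"
      proof
        fix p assume p: "p \<in> {1..n}"
        then show "p \<in> hh ` {1..n'}" using hh_iota[OF p] I1[OF p] by (metis imageI)
      qed
    qed
  next
    fix q :: nat assume "q \<notin> {1..n'}" then show "hh q = 0" unfolding hh_def by auto
  next
    fix i j assume "i \<in> {1..n}" "j \<in> {1..n}" "i < j"
    then show "mf hh n' i < mf hh n' j" using mfh I5 by simp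
  qed
  define gh where "gh b = (if b \<in> {1..n} \<and> mf F n (F b) = b then G' (F b) - G (F b) else 0)" for b
  have hH: "(n', n, hh, gh) \<in> gOS_Hom n' n" using ossh unfolding mem_gOS_Hom gh_def by simp
  have sumeq: "(\<Sum>j\<in>{j\<in>{1..n}. F j = a}. gh j) = G' a - G a" if a: "a \<in> {1..c}" for a
  proof -
    have "(\<Sum>j\<in>{j\<in>{1..n}. F j = a}. gh j) = (\<Sum>j\<in>{j\<in>{1..n}. F j = a}. if j = mf F n a then G' a - G a else 0)"
      by (rule sum.cong) (auto simp: gh_def)
    also have "\<dots> = G' a - G a" using mf_in[OF oF a] by (simp add: sum.delta)
    finally show ?thesis .
  qed
  have "gOS_comp x (n', n, hh, gh) = (n', c, \<lambda>q. if q \<in> {1..n'} then F (hh q) else 0,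
      \<lambda>a. if a \<in> {1..c} then G a + (\<Sum>j\<in>{j\<in>{1..n}. F j = a}. gh j) else 0)"
    unfolding x(1) gOS_comp_def by simp
  also have "\<dots> = y"
  proof -
    have "(\<lambda>q. if q \<in> {1..n'} then F (hh q) else 0) = F'"
    proof
      fix q show "(if q \<in> {1..n'} then F (hh q) else 0) = F' q"
        using hhK[of q] oss_zero[OF oF', of q] unfolding K_def by auto
    qed
    moreover have "(\<lambda>a. if a \<in> {1..c} then G a + (\<Sum>j\<in>{j\<in>{1..n}. F j = a}. gh j) else 0) = G'"
    proof
      fix a show "(if a \<in> {1..c} then G a + (\<Sum>j\<in>{j\<in>{1..n}. F j = a}. gh j) else 0) = G' a"
        using sumeq[of a] Gle[of a] zG' by auto
    qed
    ultimately show ?thesis using y(1) by simp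
  qed
  finally show ?thesis using hH by auto
qed

lemma noeth: "noetherian_under (UNIV :: nat set) gOSop_Hom gOSop_comp c"
  unfolding noetherian_under_def
proof (intro allI impI)
  fix x :: "nat \<Rightarrow> gos_mor"
  assume xk: "\<forall>k. x k \<in> out_mor UNIV gOSop_Hom c"
  have xd: "\<exists>n F G. x k = (n, c, F, G) \<and> x k \<in> gOS_Hom n c" for k
  proof -
    obtain n where "x k \<in> gOS_Hom n c" using xk unfolding out_mor_def gOSop_Hom_def by blast
    then show ?thesis by (cases "x k") (auto simp: mem_gOS_Hom)
  qed
  have inL: "word (x k) \<in> lists ({1..c} \<times> (UNIV :: bool set) \<times> (UNIV :: nat set))" for k
  proof -
    obtain n F G where d: "x k = (n, c, F, G)" "x k \<in> gOS_Hom n c" using xd by blast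
    then have oF: "oss F n c" by (simp add: mem_gOS_Hom)
    show ?thesis unfolding d(1) word_def lab_def using oss_range[OF oF] by auto
  qed
  have "goodseq (list_emb Pl) (\<lambda>k. word (x k))"
    using higman_lemma[OF alpha_wqo[of c]] inL unfolding wqo_on_def by (elim allE[of _ "\<lambda>k. word (x k)"]) simp
  then obtain i j where ij: "i < j" "list_emb Pl (word (x i)) (word (x j))" unfolding goodseq_def by blast
  obtain n F G where di: "x i = (n, c, F, G)" "x i \<in> gOS_Hom n c" using xd by blast
  obtain n' F' G' where dj: "x j = (n', c, F', G')" "x j \<in> gOS_Hom n' c" using xd by blast
  obtain h where h: "h \<in> gOS_Hom n' n" "x j = gOS_comp (x i) h" using emb_le[OF di dj ij(2)] by blast
  have "mor_le UNIV gOSop_Hom gOSop_comp c (x i) (x j)"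
    unfolding mor_le_def gOSop_Hom_def gOSop_comp_def using di(2) h by blast
  then show "\<exists>i j. i < j \<and> mor_le UNIV gOSop_Hom gOSop_comp c (x i) (x j)" using ij(1) by blast
qed

theorem proposition4p8:
  shows "groebner (UNIV :: nat set) gOSop_Hom gOSop_comp"
  unfolding groebner_def using admissible noeth by blast

end
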